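(* Let $\Gamma(V,d,c)$ be a coherent cost-geometry with $|V|=n$, positive scale costs $c_k$, and coherence constants $\gamma,\alpha$ as below, and let $\theta>0$. Define $$\lambda_\theta=\min_{k_\theta\le k\le K}\left[\frac{\log p_k}{c_k}\left(1+\frac{\theta\log\log n}{\log p_k}\right)\right],\qquad B^+_\theta=\max\{B_0,g(\lambda_\theta)\}.$$ Then for every $B\ge B^+_\theta$, the product measure $G(n,\mathbf{Q}^*(B))$ is $\theta$-uniformly rich for $(V,d)$.
   Context: Geometry $(V,d)$: finite $V$, $|V|=n$, $d$ symmetric, nonnegative, $d(x,y)=0$ iff $x=y$. For $\gamma>1$, $K=\lceil\log_\gamma n\rceil$, $P_k(v)=\#\{u: d(v,u)\in(\gamma^{k-1},\gamma^k]\}$; $(V,d)$ is $\gamma$-coherent if (H1) there are $A>1,\alpha>0$ with $\alpha\gamma^k\le P_k(v)\le A\gamma^k$ for all $v$, $k\in[K]$, and (H2) there are $\phi>0$, $0<\lambda<1$ with $|\{u: d(v,u)\le\gamma^{k_{vt}},\ d(u,t)\le\lambda d(v,t)\}|\ge\phi\gamma^{k_{vt}}$ for all $v\ne t$, where $d(v,t)\in(\gamma^{k_{vt}-1},\gamma^{k_{vt}}]$. A coherent cost-geometry additionally has a cost $c_k>0$ assigned to every pair at distance in $(\gamma^{k-1},\gamma^k]$. Notation: $P_k=\frac12\sum_vP_k(v)$, $p_k=P_k/n$; $g(\lambda)=\sum_{k=1}^Kc_kp_k/(1+e^{\lambda c_k})$ for $\lambda\ge0$; $\bar B=g(0)$;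 $\lambda(B)=g^{-1}(B)$ for $0<B\le\bar B$ and $\lambda(B)=0$ for $B\ge\bar B$; $\mathbf{Q}^*(B)$ has entry $1/(1+\exp(\lambda(B)c_k))$ for every pair of scale $k$. $\lambda_0=\min_{k\in[K]}\frac{1}{c_k}\log\!\left(\frac{n\log p_k}{5K\log^2n}\right)$ and $B_0=g(\lambda_0)$. $k_\theta=\frac{\theta\log\log n-\log\alpha}{\log\gamma}$. $\theta$-uniform richness: $G(n,\mathbf{Q})$ (each pair $\{i,j\}$ present independently with probability $Q_{ij}$) is $\theta$-uniformly rich for $(V,d)$ if there is a constant $M>0$ (independent of $n$) such that for every $k\ge k_\theta$ and every pair $\{i,j\}$ with $d(i,j)\in(\gamma^{k-1},\gamma^k]$, $Q_{ij}\ge\frac{1}{M\log^\theta(n)\,\gamma^k}$. *)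

theory Defs
  imports Complex_Main
begin

definition geometry :: "'a set \<Rightarrow> ('a \<Rightarrow> 'a \<Rightarrow> real) \<Rightarrow> bool" where
  "geometry V d \<longleftrightarrow> finite V \<and>
     (\<forall>x\<in>V. \<forall>y\<in>V. d x y = d y x \<and> 0 \<le> d x y \<and> (d x y = 0 \<longleftrightarrow> x = y))"

definition Kmax :: "real \<Rightarrow> nat \<Rightarrow> nat" where
  "Kmax \<gamma> n = nat \<lceil>log \<gamma> (real n)\<rceil>"

definition scale :: "real \<Rightarrow> real \<Rightarrow> int" where
  "scale \<gamma> x = \<lceil>log \<gamma> x\<rceil>"

definition Pv :: "'a set \<Rightarrow> ('a \<Rightarrow> 'a \<Rightarrow> real) \<Rightarrow> real \<Rightarrow> nat \<Rightarrow> 'a \<Rightarrow> nat" where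
  "Pv V d \<gamma> k v = card {u \<in> V. \<gamma> ^ (k - 1) < d v u \<and> d v u \<le> \<gamma> ^ k}"

definition coherent ::
  "'a set \<Rightarrow> ('a \<Rightarrow> 'a \<Rightarrow> real) \<Rightarrow> real \<Rightarrow> real \<Rightarrow> real \<Rightarrow> real \<Rightarrow> real \<Rightarrow> bool" where
  "coherent V d \<gamma> A \<alpha> \<phi> lam \<longleftrightarrow> geometry V d \<and> \<gamma> > 1 \<and> A > 1 \<and> \<alpha> > 0 \<and>
     (\<forall>v\<in>V. \<forall>k\<in>{1..Kmax \<gamma> (card V)}.
        \<alpha> * \<gamma> ^ k \<le> real (Pv V d \<gamma> k v) \<and> real (Pv V d \<gamma> k v) \<le> A * \<gamma> ^ k) \<and>
     \<phi> > 0 \<and> 0 < lam \<and> lam < 1 \<and>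
     (\<forall>v\<in>V. \<forall>t\<in>V. v \<noteq> t \<longrightarrow>
        real (card {u \<in> V. d v u \<le> \<gamma> powr (real_of_int (scale \<gamma> (d v t))) \<and>
                           d u t \<le> lam * d v t})
        \<ge> \<phi> * \<gamma> powr (real_of_int (scale \<gamma> (d v t))))"

definition coherent_cost_geometry ::
  "'a set \<Rightarrow> ('a \<Rightarrow> 'a \<Rightarrow> real) \<Rightarrow> (nat \<Rightarrow> real) \<Rightarrow> real \<Rightarrow> real \<Rightarrow> real \<Rightarrow> real \<Rightarrow> real \<Rightarrow> bool" where
  "coherent_cost_geometry V d c \<gamma> A \<alpha> \<phi> lam \<longleftrightarrow>
     coherent V d \<gamma> A \<alpha> \<phi> lam \<and> (\<forall>k\<in>{1..Kmax \<gamma> (card V)}. c k > 0)"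

definition pk :: "'a set \<Rightarrow> ('a \<Rightarrow> 'a \<Rightarrow> real) \<Rightarrow> real \<Rightarrow> nat \<Rightarrow> real" where
  "pk V d \<gamma> k = ((1/2) * (\<Sum>v\<in>V. real (Pv V d \<gamma> k v))) / real (card V)"

definition gfun :: "'a set \<Rightarrow> ('a \<Rightarrow> 'a \<Rightarrow> real) \<Rightarrow> (nat \<Rightarrow> real) \<Rightarrow> real \<Rightarrow> real \<Rightarrow> real" where
  "gfun V d c \<gamma> l = (\<Sum>k\<in>{1..Kmax \<gamma> (card V)}. c k * pk V d \<gamma> k / (1 + exp (l * c k)))"

definition Bbar :: "'a set \<Rightarrow> ('a \<Rightarrow> 'a \<Rightarrow> real) \<Rightarrow> (nat \<Rightarrow> real) \<Rightarrow> real \<Rightarrow> real" where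
  "Bbar V d c \<gamma> = gfun V d c \<gamma> 0"

definition lamB :: "'a set \<Rightarrow> ('a \<Rightarrow> 'a \<Rightarrow> real) \<Rightarrow> (nat \<Rightarrow> real) \<Rightarrow> real \<Rightarrow> real \<Rightarrow> real" where
  "lamB V d c \<gamma> B =
     (if Bbar V d c \<gamma> \<le> B then 0 else THE l. 0 \<le> l \<and> gfun V d c \<gamma> l = B)"

definition Qstar :: "'a set \<Rightarrow> ('a \<Rightarrow> 'a \<Rightarrow> real) \<Rightarrow> (nat \<Rightarrow> real) \<Rightarrow> real \<Rightarrow> real \<Rightarrow> nat \<Rightarrow> real" where
  "Qstar V d c \<gamma> B k = 1 / (1 + exp (lamB V d c \<gamma> B * c k))"

definition lambda0 :: "'a set \<Rightarrow> ('a \<Rightarrow> 'a \<Rightarrow> real) \<Rightarrow> (nat \<Rightarrow> real) \<Rightarrow> real \<Rightarrow> real" where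
  "lambda0 V d c \<gamma> = (let n = real (card V); K = Kmax \<gamma> (card V) in
     Min ((\<lambda>k. (1 / c k) * ln (n * ln (pk V d \<gamma> k) / (5 * real K * (ln n)^2))) ` {1..K}))"

definition B0 :: "'a set \<Rightarrow> ('a \<Rightarrow> 'a \<Rightarrow> real) \<Rightarrow> (nat \<Rightarrow> real) \<Rightarrow> real \<Rightarrow> real" where
  "B0 V d c \<gamma> = gfun V d c \<gamma> (lambda0 V d c \<gamma>)"

definition k_theta :: "real \<Rightarrow> real \<Rightarrow> real \<Rightarrow> nat \<Rightarrow> real" where
  "k_theta \<theta> \<alpha> \<gamma> n = (\<theta> * ln (ln (real n)) - ln \<alpha>) / ln \<gamma>"

definition lambda_theta ::
  "'a set \<Rightarrow> ('a \<Rightarrow> 'a \<Rightarrow> real) \<Rightarrow> (nat \<Rightarrow> real) \<Rightarrow> real \<Rightarrow> real \<Rightarrow> real \<Rightarrow> real" where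
  "lambda_theta V d c \<gamma> \<alpha> \<theta> = (let n = card V in
     Min ((\<lambda>k. (ln (pk V d \<gamma> k) / c k) * (1 + \<theta> * ln (ln (real n)) / ln (pk V d \<gamma> k)))
          ` {k \<in> {1..Kmax \<gamma> n}. k_theta \<theta> \<alpha> \<gamma> n \<le> real k}))"

definition Bplus_theta ::
  "'a set \<Rightarrow> ('a \<Rightarrow> 'a \<Rightarrow> real) \<Rightarrow> (nat \<Rightarrow> real) \<Rightarrow> real \<Rightarrow> real \<Rightarrow> real \<Rightarrow> real" where
  "Bplus_theta V d c \<gamma> \<alpha> \<theta> =
     max (B0 V d c \<gamma>) (gfun V d c \<gamma> (lambda_theta V d c \<gamma> \<alpha> \<theta>))"

definition rich_with_const ::
  "real \<Rightarrow> real \<Rightarrow> 'a set \<Rightarrow> ('a \<Rightarrow> 'a \<Rightarrow> real) \<Rightarrow> real \<Rightarrow> real \<Rightarrow> ('a \<Rightarrow> 'a \<Rightarrow> real) \<Rightarrow> bool" where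
  "rich_with_const M \<theta> V d \<gamma> \<alpha> Q \<longleftrightarrow>
     (\<forall>i\<in>V. \<forall>j\<in>V. \<forall>k::nat. i \<noteq> j \<and> 1 \<le> k \<and> k \<le> Kmax \<gamma> (card V) \<and>
        k_theta \<theta> \<alpha> \<gamma> (card V) \<le> real k \<and>
        \<gamma> ^ (k - 1) < d i j \<and> d i j \<le> \<gamma> ^ k \<longrightarrow>
        Q i j \<ge> 1 / (M * (ln (real (card V))) powr \<theta> * \<gamma> ^ k))"

definition Qmat :: "'a set \<Rightarrow> ('a \<Rightarrow> 'a \<Rightarrow> real) \<Rightarrow> (nat \<Rightarrow> real) \<Rightarrow> real \<Rightarrow> real \<Rightarrow> 'a \<Rightarrow> 'a \<Rightarrow> real" where
  "Qmat V d c \<gamma> B i j = Qstar V d c \<gamma> B (nat (scale \<gamma> (d i j)))"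

end

theory Submission
  imports Defs
begin

lemma pk_nonneg: "pk V d \<gamma> k \<ge> 0"
  unfolding pk_def by (auto intro!: divide_nonneg_nonneg sum_nonneg)

lemma g_mono_term:
  fixes a c l1 l2 :: real
  assumes "a \<ge> 0" "c > 0" "l1 \<le> l2"
  shows "a / (1 + exp (l2 * c)) \<le> a / (1 + exp (l1 * c))"
proof -
  have "exp (l1*c) \<le> exp (l2*c)" using assms by (simp add: mult_right_mono)
  then show ?thesis using assms
    by (intro divide_left_mono) (auto simp: add_pos_pos)
qed

lemma g_strict_term:
  fixes a c l1 l2 :: real
  assumes "a > 0" "c > 0" "l1 < l2"
  shows "a / (1 + exp (l2 * c)) < a / (1 + exp (l1 * c))"
proof -
  have "exp (l1*c) < exp (l2*c)" using assms by (simp add: mult_strict_right_mono)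
  then show ?thesis using assms
    by (intro divide_strict_left_mono) (auto simp: add_pos_pos)
qed

lemma g_strict:
  assumes cpos: "\<forall>k\<in>{1..Kmax \<gamma> (card V)}. c k > 0"
    and k0: "k0 \<in> {1..Kmax \<gamma> (card V)}" "pk V d \<gamma> k0 > 0"
    and "l1 < l2"
  shows "gfun V d c \<gamma> l2 < gfun V d c \<gamma> l1"
  unfolding gfun_def
proof (rule sum_strict_mono_ex1)
  show "\<forall>x\<in>{1..Kmax \<gamma> (card V)}. c x * pk V d \<gamma> x / (1 + exp (l2 * c x))
      \<le> c x * pk V d \<gamma> x / (1 + exp (l1 * c x))"
    using cpos assms(4) by (auto intro!: g_mono_term simp: pk_nonneg)
  show "\<exists>a\<in>{1..Kmax \<gamma> (card V)}. c a * pk V d \<gamma> a / (1 + exp (l2 * c a))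
      < c a * pk V d \<gamma> a / (1 + exp (l1 * c a))"
    using cpos k0 assms(4) by (intro bexI[OF _ k0(1)] g_strict_term) auto
qed simp

lemma g_cont: "continuous_on S (gfun V d c \<gamma>)"
proof -
  have "\<And>l k. 1 + exp (l * c k) \<noteq> (0::real)"
    by (metis add_pos_pos exp_gt_zero less_irrefl zero_less_one)
  then show ?thesis unfolding gfun_def
    by (intro continuous_intros) auto
qed

lemma lamB_le:
  assumes cpos: "\<forall>k\<in>{1..Kmax \<gamma> (card V)}. c k > 0"
    and k0: "k0 \<in> {1..Kmax \<gamma> (card V)}" "pk V d \<gamma> k0 > 0"
    and B: "B \<ge> gfun V d c \<gamma> lt"
  shows "lamB V d c \<gamma> B \<le> max 0 lt"
proof (cases "Bbar V d c \<gamma> \<le> B")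
  case True
  then show ?thesis by (simp add: lamB_def)
next
  case False
  have lt0: "lt > 0"
  proof (rule ccontr)
    assume "\<not> lt > 0"
    then have "lt \<le> 0" by simp
    then have "gfun V d c \<gamma> 0 \<le> gfun V d c \<gamma> lt"
    proof (cases "lt = 0")
      case False
      then have "lt < 0" using \<open>lt \<le> 0\<close> by simp
      then show ?thesis using g_strict[OF cpos k0, of lt 0] by simp
    qed simp
    then show False using False B by (simp add: Bbar_def)
  qed
  have "\<exists>x. 0 \<le> x \<and> x \<le> lt \<and> gfun V d c \<gamma> x = B"
  proof (rule IVT2')
    show "gfun V d c \<gamma> lt \<le> B" by (rule B)
    show "B \<le> gfun V d c \<gamma> 0" using False by (simp add: Bbar_def)
    show "0 \<le> lt" using lt0 by simp
  qed (rule g_cont)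
  then obtain x where x: "0 \<le> x" "x \<le> lt" "gfun V d c \<gamma> x = B" by blast
  have uniq: "y = x" if "0 \<le> y" "gfun V d c \<gamma> y = B" for y
  proof (rule ccontr)
    assume "y \<noteq> x"
    then have "y < x \<or> x < y" by auto
    then show False
    proof
      assume "y < x"
      then show False using g_strict[OF cpos k0, of y x] that x by simp
    next
      assume "x < y"
      then show False using g_strict[OF cpos k0, of x y] that x by simp
    qed
  qed
  have "(THE l. 0 \<le> l \<and> gfun V d c \<gamma> l = B) = x"
  proof (rule the_equality)
    show "0 \<le> x \<and> gfun V d c \<gamma> x = B" using x by simp
  next
    fix y assume "0 \<le> y \<and> gfun V d c \<gamma> y = B"
    then show "y = x" using uniq by blast
  qed
  then have "lamB V d c \<gamma> B = x" using False unfolding lamB_def by simp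
  then show ?thesis using x by simp
qed

theorem proposition2:
  fixes \<gamma> A \<alpha> \<phi> lam \<theta> :: real
  assumes "\<theta> > 0"
  shows "\<exists>M>0. \<forall>(V :: 'a set) d c.
           coherent_cost_geometry V d c \<gamma> A \<alpha> \<phi> lam \<longrightarrow>
           (\<forall>B. B \<ge> Bplus_theta V d c \<gamma> \<alpha> \<theta> \<longrightarrow>
                rich_with_const M \<theta> V d \<gamma> \<alpha> (Qmat V d c \<gamma> B))"
proof -
  define L0 where "L0 = ln (2::real) powr \<theta>"
  have L0pos: "L0 > 0" unfolding L0_def by simp
  define M where "M = 2 / L0 + \<bar>A\<bar> + 1"
  have "2 / L0 > 0" using L0pos by simp
  then have Mpos: "M > 0" unfolding M_def using abs_ge_zero[of A] by linarith
  show ?thesis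
  proof (intro exI[of _ M] conjI allI impI Mpos)
    fix V :: "'a set" and d c B
    assume ccg: "coherent_cost_geometry V d c \<gamma> A \<alpha> \<phi> lam"
      and B: "B \<ge> Bplus_theta V d c \<gamma> \<alpha> \<theta>"
    define n where "n = card V"
    define K where "K = Kmax \<gamma> n"
    have geo: "geometry V d" and g1: "\<gamma> > 1" and A1: "A > 1" and a0: "\<alpha> > 0"
      and H1: "\<forall>v\<in>V. \<forall>k\<in>{1..K}. \<alpha> * \<gamma> ^ k \<le> real (Pv V d \<gamma> k v) \<and> real (Pv V d \<gamma> k v) \<le> A * \<gamma> ^ k"
      and cpos: "\<forall>k\<in>{1..Kmax \<gamma> (card V)}. c k > 0"
      using ccg unfolding coherent_cost_geometry_def coherent_def K_def n_def by auto
    have finV: "finite V" using geo unfolding geometry_def by auto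
    show "rich_with_const M \<theta> V d \<gamma> \<alpha> (Qmat V d c \<gamma> B)"
      unfolding rich_with_const_def
    proof (intro ballI allI impI)
      fix i j k
      assume ij: "i \<in> V" "j \<in> V"
        and hk: "i \<noteq> j \<and> 1 \<le> k \<and> k \<le> Kmax \<gamma> (card V) \<and> k_theta \<theta> \<alpha> \<gamma> (card V) \<le> real k \<and>
          \<gamma> ^ (k - 1) < d i j \<and> d i j \<le> \<gamma> ^ k"
      have kK: "k \<in> {1..K}" using hk by (simp add: K_def n_def)
      have "{i, j} \<subseteq> V" using ij by auto
      then have "card {i,j} \<le> n" unfolding n_def using finV card_mono by blast
      then have n2: "n \<ge> 2" using hk by simp
      have Vne: "V \<noteq> {}" using ij by auto
      define p where "p = pk V d \<gamma> k"
      have gk: "\<gamma> ^ k \<ge> 1" using g1 by simp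
      have Pvpos: "real (Pv V d \<gamma> k v) > 0" if "v \<in> V" for v
      proof -
        have "\<alpha> * \<gamma> ^ k > 0" using a0 g1 by simp
        then show ?thesis using H1 that kK by (meson less_le_trans)
      qed
      have ppos: "p > 0" unfolding p_def pk_def n_def[symmetric]
        using Pvpos n2 finV Vne by (auto intro!: divide_pos_pos mult_pos_pos sum_pos)
      have "(\<Sum>v\<in>V. real (Pv V d \<gamma> k v)) \<le> real n * (A * \<gamma> ^ k)"
        unfolding n_def using H1 kK by (intro sum_bounded_above) auto
      then have pub: "p \<le> A * \<gamma> ^ k / 2" unfolding p_def pk_def n_def[symmetric]
        using n2 by (simp add: field_simps)
      have dpos: "d i j > 0" using hk g1 proof -
        have "\<gamma> ^ (k - 1) > 0" using g1 by simp
        then show ?thesis using hk by linarith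
      qed
      have e1: "log \<gamma> (\<gamma> ^ (k-1)) = real k - 1" using g1 hk by (simp add: log_nat_power of_nat_diff)
      have e2: "log \<gamma> (\<gamma> ^ k) = real k" using g1 by (simp add: log_nat_power)
      have "log \<gamma> (\<gamma> ^ (k-1)) < log \<gamma> (d i j)" using hk g1 dpos
        by (subst log_less_cancel_iff) auto
      then have l1: "log \<gamma> (d i j) > real k - 1" using e1 by simp
      have "log \<gamma> (d i j) \<le> log \<gamma> (\<gamma> ^ k)" using hk g1 dpos
        by (subst log_le_cancel_iff) auto
      then have l2: "log \<gamma> (d i j) \<le> real k" using e2 by simp
      have "scale \<gamma> (d i j) = int k" unfolding scale_def
        using l1 l2 by (intro ceiling_unique) auto
      then have Q: "Qmat V d c \<gamma> B i j = 1 / (1 + exp (lamB V d c \<gamma> B * c k))"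
        by (simp add: Qmat_def Qstar_def)
      define lt where "lt = lambda_theta V d c \<gamma> \<alpha> \<theta>"
      define f where "f = (ln p / c k) * (1 + \<theta> * ln (ln (real n)) / ln p)"
      have ltf: "lt \<le> f" unfolding lt_def lambda_theta_def f_def p_def Let_def n_def
        using hk kK by (intro Min_le) (auto simp: K_def n_def)
      have Bg: "B \<ge> gfun V d c \<gamma> lt" using B unfolding Bplus_theta_def lt_def by simp
      have ck: "c k > 0" using cpos kK by (simp add: K_def n_def)
      have lB: "lamB V d c \<gamma> B \<le> max 0 lt"
        using lamB_le[OF cpos _ _ Bg, of k] kK ppos by (simp add: K_def n_def p_def)
      define L where "L = ln (real n) powr \<theta>"
      have lnpos: "ln (real n) > 0" using n2 by simp
      have LL0: "L \<ge> L0" unfolding L_def L0_def using n2 assms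
        by (intro powr_mono2) auto
      have E: "exp (lamB V d c \<gamma> B * c k) \<le> 1 + p * L"
      proof -
        have pL: "p * L \<ge> 0" using ppos LL0 L0pos by simp
        have "lamB V d c \<gamma> B * c k \<le> max 0 lt * c k" using lB ck by (simp add: mult_right_mono)
        also have "\<dots> \<le> max 0 f * c k" using ltf ck by (intro mult_right_mono) auto
        finally have le: "exp (lamB V d c \<gamma> B * c k) \<le> exp (max 0 f * c k)" by simp
        show ?thesis
        proof (cases "ln p = 0")
          case True
          then have "f = 0" unfolding f_def by simp
          then have "exp (lamB V d c \<gamma> B * c k) \<le> 1" using le by simp
          then show ?thesis using pL by linarith
        next
          case False
          have fc: "f * c k = ln p + \<theta> * ln (ln (real n))" unfolding f_def
            using False ck by (simp add: field_simps)
          have "exp (f * c k) = p * L" unfolding fc L_def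
            using ppos lnpos by (simp add: exp_add powr_def mult.commute)
          then have "exp (max 0 f * c k) \<le> 1 + p * L" using pL ck
            by (cases "f \<le> 0") (auto simp: max_def)
          then show ?thesis using le by (rule order.trans[rotated])
        qed
      qed
      have Lpos: "L > 0" using LL0 L0pos by simp
      have "2 \<le> 2 / L0 * L * \<gamma> ^ k"
      proof -
        have "2 / L0 * L \<ge> 2" using LL0 L0pos by (simp add: field_simps)
        then show ?thesis using gk mult_mono[of 2 "2 / L0 * L" 1 "\<gamma> ^ k"] by simp
      qed
      moreover have "p * L \<le> (\<bar>A\<bar> + 1) * L * \<gamma> ^ k"
      proof -
        have "p * L \<le> A * \<gamma> ^ k / 2 * L" using pub Lpos by (simp add: mult_right_mono)
        also have "\<dots> \<le> (\<bar>A\<bar> + 1) * \<gamma> ^ k * L" using Lpos gk A1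
          by (intro mult_right_mono) auto
        finally show ?thesis by (simp add: mult_ac)
      qed
      ultimately have tot: "2 + p * L \<le> M * L * \<gamma> ^ k" unfolding M_def by (simp add: algebra_simps)
      have "1 / (M * L * \<gamma> ^ k) \<le> 1 / (2 + p * L)"
      proof -
        have "p * L > 0" using Lpos ppos by simp
        then have h: "2 + p * L > 0" by linarith
        then have "M * L * \<gamma> ^ k > 0" using tot by linarith
        then show ?thesis using tot h by (intro divide_left_mono) auto
      qed
      also have "\<dots> \<le> 1 / (1 + exp (lamB V d c \<gamma> B * c k))"
      proof -
        have "p * L > 0" using Lpos ppos by simp
        then have h: "2 + p * L > 0" by linarith
        have h2: "1 + exp (lamB V d c \<gamma> B * c k) > 0" by (simp add: add_pos_pos)
        show ?thesis using E h h2 by (intro divide_left_mono) (auto intro: mult_pos_pos)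
      qed
      finally show "1 / (M * ln (real (card V)) powr \<theta> * \<gamma> ^ k) \<le> Qmat V d c \<gamma> B i j"
        using Q by (simp add: L_def n_def)
    qed
  qed
qed

end
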